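(* Let $A$ be a commutative $\mathbb{R}$-algebra and $A^2 \subseteq A$ the subsemiring of all sums of squares. Let $M \subseteq A$ be a quadratic module for which there is $v \in A^2$ such that for every $a \in A^2$ there is $p \in \mathbb{R}_+[X]$ with $p(v) - a \in M$. Then the following are equivalent for $a \in A$: (1) $f(a) \geq 0$ for every algebra homomorphism $f : A \to \mathbb{R}$ with $f(M) \subseteq \mathbb{R}_+$. (2) For every $r \in \mathbb{R}_+$ and $\varepsilon > 0$, there exist a polynomial $q \in \mathbb{R}_+[X]$ and an element $w \in A^2$ such that $q(r) \leq \varepsilon$ and $(1 + w)\,(a + q(v)) \in M$.
   Context: A quadratic module in $A$ is a subset $M \subseteq A$ with $1 \in M$ which is closed under addition and under multiplication by elements of $A^2$ (sums of squares). *)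

theory Defs
  imports "HOL-Computational_Algebra.Polynomial"
begin

definition sos :: "'a::comm_ring_1 set" where
  "sos = {y. \<exists>I :: nat set. \<exists>g. finite I \<and> y = (\<Sum>i\<in>I. (g i)^2)}"

definition quadratic_module :: "'a::comm_ring_1 set \<Rightarrow> bool" where
  "quadratic_module M \<longleftrightarrow> 1 \<in> M \<and> (\<forall>x\<in>M. \<forall>y\<in>M. x + y \<in> M)
     \<and> (\<forall>s\<in>sos. \<forall>x\<in>M. s * x \<in> M)"

definition nonneg_poly :: "real poly \<Rightarrow> bool" where
  "nonneg_poly p \<longleftrightarrow> (\<forall>i. coeff p i \<ge> 0)"

definition peval :: "real poly \<Rightarrow> 'a::{comm_ring_1,real_algebra_1} \<Rightarrow> 'a" where
  "peval p x = poly (map_poly of_real p) x"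

definition alg_hom_real :: "('a::{comm_ring_1,real_algebra_1} \<Rightarrow> real) \<Rightarrow> bool" where
  "alg_hom_real f \<longleftrightarrow> (\<forall>x y. f (x + y) = f x + f y) \<and> (\<forall>c x. f (c *\<^sub>R x) = c * f x)
     \<and> (\<forall>x y. f (x * y) = f x * f y) \<and> f 1 = 1"

end

theory Submission
  imports Defs
begin

lemma sosI: "finite (I::nat set) \<Longrightarrow> y = (\<Sum>i\<in>I. (g i)^2) \<Longrightarrow> y \<in> sos"
  unfolding sos_def by blast

lemma sosE: assumes "y \<in> sos" obtains I g where "finite (I::nat set)" "y = (\<Sum>i\<in>I. (g i)^2)"
  using assms unfolding sos_def by blast

lemma sos_0: "0 \<in> sos"
  unfolding sos_def by (rule CollectI, rule exI[of _ "{}"], auto)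

lemma sos_sq: "x^2 \<in> sos"
  unfolding sos_def by (rule CollectI, rule exI[of _ "{0}"], rule exI[of _ "\<lambda>_. x"], auto)

lemma sos_add:
  assumes "a \<in> sos" "b \<in> sos" shows "a + b \<in> sos"
proof -
  from assms obtain I g J h where I: "finite (I::nat set)" "a = (\<Sum>i\<in>I. (g i)^2)"
    and J: "finite (J::nat set)" "b = (\<Sum>i\<in>J. (h i)^2)" unfolding sos_def by blast
  define K where "K = (\<lambda>i. 2*i) ` I \<union> (\<lambda>j. 2*j+1) ` J"
  define k where "k = (\<lambda>n::nat. if even n then g (n div 2) else h (n div 2))"
  have ne: "\<And>i j::nat. 2*i \<noteq> 2*j+1" by presburger
  have disj: "(\<lambda>i. 2*i) ` I \<inter> (\<lambda>j. 2*j+1) ` J = {}" using ne by blast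
  have "(\<Sum>i\<in>K. (k i)^2) = (\<Sum>i\<in>(\<lambda>i. 2*i) ` I. (k i)^2) + (\<Sum>i\<in>(\<lambda>j. 2*j+1) ` J. (k i)^2)"
    unfolding K_def using I J disj by (intro sum.union_disjoint) auto
  also have "(\<Sum>i\<in>(\<lambda>i. 2*i) ` I. (k i)^2) = a"
    using I by (subst sum.reindex) (auto simp: inj_on_def k_def)
  also have "(\<Sum>i\<in>(\<lambda>j. 2*j+1) ` J. (k i)^2) = b"
    using J by (subst sum.reindex) (auto simp: inj_on_def k_def)
  finally have "a + b = (\<Sum>i\<in>K. (k i)^2)" by simp
  moreover have "finite K" using I J K_def by simp
  ultimately show ?thesis by (intro sosI[of K _ k])
qed

lemma sos_sum: "finite S \<Longrightarrow> (\<And>i. i \<in> S \<Longrightarrow> f i \<in> sos) \<Longrightarrow> sum f S \<in> sos"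
  by (induction S rule: finite_induct) (auto intro: sos_0 sos_add)

lemma sq_mult_sos:
  assumes "b \<in> sos" shows "x^2 * b \<in> sos"
proof -
  from assms obtain I g where I: "finite (I::nat set)" "b = (\<Sum>i\<in>I. (g i)^2)" unfolding sos_def by blast
  have "x^2 * b = (\<Sum>i\<in>I. (x * g i)^2)" using I by (simp add: sum_distrib_left power_mult_distrib)
  thus ?thesis using I by (intro sosI[of I _ "\<lambda>i. x * g i"])
qed

lemma sos_mult:
  assumes "a \<in> sos" "b \<in> sos" shows "a * b \<in> sos"
proof -
  from assms obtain I g where I: "finite (I::nat set)" "a = (\<Sum>i\<in>I. (g i)^2)" unfolding sos_def by blast
  have "a * b = (\<Sum>i\<in>I. (g i)^2 * b)" using I by (simp add: sum_distrib_right)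
  thus ?thesis using I assms by (auto intro!: sos_sum sq_mult_sos)
qed

lemma sos_1: "1 \<in> sos" using sos_sq[of 1] by simp

lemma sos_pow: "a \<in> sos \<Longrightarrow> a ^ n \<in> sos"
  by (induction n) (auto intro: sos_1 sos_mult)

lemma sos_of_real: "(c::real) \<ge> 0 \<Longrightarrow> (of_real c :: 'a::{comm_ring_1,real_algebra_1}) \<in> sos"
  using sos_sq[of "of_real (sqrt c) :: 'a"] by (simp add: of_real_power[symmetric])

lemma sos_scaleR: "(c::real) \<ge> 0 \<Longrightarrow> (a :: 'a::{comm_ring_1,real_algebra_1}) \<in> sos \<Longrightarrow> c *\<^sub>R a \<in> sos"
  by (simp add: scaleR_conv_of_real sos_mult sos_of_real)

lemma qm_one: "quadratic_module M \<Longrightarrow> 1 \<in> M" by (simp add: quadratic_module_def)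
lemma qm_add: "quadratic_module M \<Longrightarrow> x \<in> M \<Longrightarrow> y \<in> M \<Longrightarrow> x + y \<in> M"
  by (simp add: quadratic_module_def)
lemma qm_mult: "quadratic_module M \<Longrightarrow> s \<in> sos \<Longrightarrow> x \<in> M \<Longrightarrow> s * x \<in> M"
  by (simp add: quadratic_module_def)
lemma qm_sos: "quadratic_module M \<Longrightarrow> s \<in> sos \<Longrightarrow> s \<in> M"
  using qm_mult[of M s 1] qm_one[of M] by simp
lemma qm_0: "quadratic_module M \<Longrightarrow> 0 \<in> M"
  using qm_sos sos_0 by blast
lemma qm_scaleR: "quadratic_module M \<Longrightarrow> (c::real) \<ge> 0 \<Longrightarrow> (x :: 'a::{comm_ring_1,real_algebra_1}) \<in> M \<Longrightarrow> c *\<^sub>R x \<in> M"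
  by (simp add: scaleR_conv_of_real qm_mult sos_of_real)
lemma qm_of_real: "quadratic_module (M :: 'a::{comm_ring_1,real_algebra_1} set) \<Longrightarrow> (c::real) \<ge> 0 \<Longrightarrow> of_real c \<in> M"
  by (simp add: qm_sos sos_of_real)
lemma qm_sum: assumes "quadratic_module M" shows "finite S \<Longrightarrow> (\<And>i. i \<in> S \<Longrightarrow> f i \<in> M) \<Longrightarrow> sum f S \<in> M"
  by (induction S rule: finite_induct) (auto intro: qm_0 qm_add assms)

lemma four_ident:
  fixes y z :: "'a::{comm_ring_1,real_algebra_1}"
  shows "y * z = (1/4::real) *\<^sub>R ((z+1)^2 * y + (z-1)^2 * (-y))"
proof -
  have "(z+1)^2 * y + (z-1)^2 * (-y) = 4 * (y * z)" by (simp add: algebra_simps power2_eq_square)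
  moreover have "(of_real (1/4) :: 'a) * 4 = 1"
  proof -
    have "(of_real (1/4) :: 'a) * 4 = of_real ((1/4) * 4)" by (simp only: of_real_mult of_real_numeral)
    then show ?thesis by simp
  qed
  ultimately show ?thesis by (simp add: scaleR_conv_of_real mult.assoc[symmetric])
qed

lemma qm_supp_ideal:
  fixes M :: "'a::{comm_ring_1,real_algebra_1} set"
  assumes "quadratic_module M" "y \<in> M" "-y \<in> M" shows "y * z \<in> M"
proof -
  have "(z+1)^2 * y \<in> M" using assms by (auto intro!: qm_mult sos_sq)
  moreover have "(z-1)^2 * (-y) \<in> M" using assms by (intro qm_mult sos_sq)
  ultimately have "(1/4::real) *\<^sub>R ((z+1)^2 * y + (z-1)^2 * (-y)) \<in> M"
    using assms by (intro qm_scaleR qm_add) (auto simp del: minus_mult_right mult_minus_right)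
  then show ?thesis by (subst four_ident)
qed

lemma qm_minus_one:
  fixes M :: "'a::{comm_ring_1,real_algebra_1} set"
  assumes "quadratic_module M" "-1 \<in> M" shows "z \<in> M"
  using qm_supp_ideal[OF assms(1) qm_one[OF assms(1)], of z] assms by simp

lemma map_poly_of_real_add: "map_poly of_real (p + q) = (map_poly of_real p + map_poly of_real q :: 'a::real_algebra_1 poly)"
  by (intro poly_eqI) (simp add: coeff_map_poly)

lemma map_poly_of_real_mult: "map_poly of_real (p * q) = (map_poly of_real p * map_poly of_real q :: 'a::{comm_ring_1,real_algebra_1} poly)"
  by (intro poly_eqI) (simp add: coeff_map_poly coeff_mult)

lemma peval_add: "peval (p + q) x = peval p x + peval q x"
  by (simp add: peval_def map_poly_of_real_add)

lemma peval_mult: "peval (p * q) x = peval p x * peval q x"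
  by (simp add: peval_def map_poly_of_real_mult)

lemma peval_0: "peval 0 x = 0" by (simp add: peval_def)

lemma peval_const: "peval [:c:] x = of_real c" by (simp add: peval_def map_poly_pCons)

lemma peval_pCons: "peval (pCons c p) x = of_real c + x * peval p x"
  by (simp add: peval_def map_poly_pCons)

lemma peval_monom: "peval (monom c n) x = of_real c * x ^ n"
  by (simp add: peval_def map_poly_monom poly_monom)

lemma nn_0: "nonneg_poly 0" by (simp add: nonneg_poly_def)
lemma nn_add: "nonneg_poly p \<Longrightarrow> nonneg_poly q \<Longrightarrow> nonneg_poly (p + q)"
  by (simp add: nonneg_poly_def)
lemma nn_mult: "nonneg_poly p \<Longrightarrow> nonneg_poly q \<Longrightarrow> nonneg_poly (p * q)"
  by (auto simp: nonneg_poly_def coeff_mult intro!: sum_nonneg)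
lemma nn_const: "c \<ge> 0 \<Longrightarrow> nonneg_poly [:c:]"
  by (auto simp: nonneg_poly_def coeff_pCons split: nat.splits)
lemma nn_monom: "c \<ge> 0 \<Longrightarrow> nonneg_poly (monom c n)"
  by (auto simp: nonneg_poly_def coeff_monom)
lemma poly_nn: "nonneg_poly p \<Longrightarrow> (r::real) \<ge> 0 \<Longrightarrow> poly p r \<ge> 0"
  by (auto simp: nonneg_poly_def poly_altdef intro!: sum_nonneg)

lemma peval_sos:
  assumes "nonneg_poly p" "v \<in> sos"
  shows "peval p (v::'a::{comm_ring_1,real_algebra_1}) \<in> sos"
proof -
  have "peval p v = (\<Sum>i\<le>degree (map_poly of_real p :: 'a poly). coeff (map_poly of_real p :: 'a poly) i * v ^ i)"
    unfolding peval_def by (rule poly_altdef)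
  also have "\<dots> = (\<Sum>i\<le>degree (map_poly of_real p :: 'a poly). of_real (coeff p i) * v ^ i)"
    by (simp add: coeff_map_poly)
  finally show ?thesis using assms
    by (auto simp: nonneg_poly_def intro!: sos_sum sos_mult sos_of_real sos_pow)
qed

lemma hom_of_real: "alg_hom_real f \<Longrightarrow> f (of_real c) = c"
  unfolding alg_hom_real_def by (metis mult.right_neutral scaleR_conv_of_real mult_1_right)

lemma hom_peval: assumes "alg_hom_real f" shows "f (peval p x) = poly p (f x)"
proof (induction p)
  case 0
  have "f 0 = f (of_real 0)" by simp
  also have "\<dots> = 0" by (rule hom_of_real[OF assms])
  finally show ?case by (simp add: peval_0)
next
  case (pCons a p)
  then show ?case using assms hom_of_real[OF assms]
    by (simp add: peval_pCons alg_hom_real_def)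
qed

lemma scaleR_of_real_div: "(c::real) \<noteq> 0 \<Longrightarrow> c *\<^sub>R (of_real (d/c) :: 'a::real_algebra_1) = of_real d"
  by (simp add: of_real_def)

lemma hom_from_qm:
  fixes P :: "'a::{comm_ring_1,real_algebra_1} set"
  assumes qm: "quadratic_module P" and np: "-1 \<notin> P" and tot: "\<forall>x. x \<in> P \<or> -x \<in> P"
    and arch: "\<forall>x. \<exists>C. of_real C - x \<in> P"
  shows "\<exists>f. alg_hom_real f \<and> (\<forall>m\<in>P. f m \<ge> 0)"
proof -
  have pos: "c \<ge> 0" if "of_real c \<in> P" for c
  proof (rule ccontr)
    assume "\<not> c \<ge> 0"
    then have "(-1/c) *\<^sub>R (of_real c :: 'a) \<in> P" using that by (intro qm_scaleR[OF qm]) auto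
    moreover have "(-1/c) *\<^sub>R (of_real c :: 'a) = -1" using \<open>\<not> c \<ge> 0\<close>
      by (simp add: scaleR_conv_of_real of_real_mult[symmetric])
    ultimately show False using np by simp
  qed
  define I where "I y \<longleftrightarrow> (\<forall>\<delta>>0. of_real \<delta> - y \<in> P \<and> of_real \<delta> + y \<in> P)" for y
  have I_ex: "\<exists>c. I (x - of_real c)" for x
  proof -
    define S where "S = {c. x - of_real c \<in> P}"
    obtain C where C: "of_real C - (-x) \<in> P" using arch by blast
    hence "-C \<in> S" unfolding S_def by (simp add: add.commute)
    obtain D where D: "of_real D - x \<in> P" using arch by blast
    have bdd: "c \<le> D" if "c \<in> S" for c
    proof -
      have "(x - of_real c) + (of_real D - x) \<in> P" using that D qm unfolding S_def by (intro qm_add) auto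
      then have "of_real (D - c) \<in> P" by (simp add: of_real_diff)
      then show ?thesis using pos by fastforce
    qed
    have ne: "S \<noteq> {}" using \<open>-C \<in> S\<close> by blast
    have ba: "bdd_above S" unfolding bdd_above_def using bdd by blast
    define c0 where "c0 = Sup S"
    have "I (x - of_real c0)" unfolding I_def
    proof (intro allI impI conjI)
      fix \<delta> :: real assume d: "\<delta> > 0"
      then have "c0 - \<delta> < Sup S" unfolding c0_def by simp
      then obtain c where c: "c \<in> S" "c0 - \<delta> < c" using less_cSup_iff[OF ne ba] by blast
      have "(x - of_real c) + of_real (c - c0 + \<delta>) \<in> P" using c qm unfolding S_def
        by (intro qm_add qm_of_real) auto
      then show "of_real \<delta> + (x - of_real c0) \<in> P" by (simp add: of_real_diff algebra_simps)
      have "c0 + \<delta> \<notin> S" using cSup_upper[OF _ ba, of "c0+\<delta>"] d unfolding c0_def by auto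
      then have "-(x - of_real (c0 + \<delta>)) \<in> P" using tot unfolding S_def by blast
      then show "of_real \<delta> - (x - of_real c0) \<in> P" by (simp add: algebra_simps)
    qed
    then show ?thesis by blast
  qed
  have I_0: "I 0" unfolding I_def using qm_of_real[OF qm] by auto
  have I_add: "I (y + z)" if "I y" "I z" for y z
    unfolding I_def
  proof (intro allI impI conjI)
    fix \<delta> :: real assume d: "\<delta> > 0"
    have "(of_real (\<delta>/2) - y) + (of_real (\<delta>/2) - z) \<in> P"
      by (rule qm_add[OF qm]) (use that d in \<open>auto simp: I_def\<close>)
    then show "of_real \<delta> - (y + z) \<in> P" by (simp add: algebra_simps of_real_add[symmetric])
    have "(of_real (\<delta>/2) + y) + (of_real (\<delta>/2) + z) \<in> P"
      by (rule qm_add[OF qm]) (use that d in \<open>auto simp: I_def\<close>)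
    then show "of_real \<delta> + (y + z) \<in> P" by (simp add: algebra_simps of_real_add[symmetric])
  qed
  have I_neg: "I (-y)" if "I y" for y using that unfolding I_def by auto
  have I_pos_scale: "I (c *\<^sub>R y)" if "I y" "c > 0" for y c
    unfolding I_def
  proof (intro allI impI conjI)
    fix \<delta> :: real assume d: "\<delta> > 0"
    have "c *\<^sub>R (of_real (\<delta>/c) - y) \<in> P" using that d qm unfolding I_def
      by (intro qm_scaleR) auto
    moreover have "c *\<^sub>R (of_real (\<delta>/c) - y) = of_real \<delta> - c *\<^sub>R y"
      using that(2) by (simp add: scaleR_right_diff_distrib scaleR_of_real_div)
    ultimately show "of_real \<delta> - c *\<^sub>R y \<in> P" by simp
    have "c *\<^sub>R (of_real (\<delta>/c) + y) \<in> P" using that d qm unfolding I_def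
      by (intro qm_scaleR) auto
    moreover have "c *\<^sub>R (of_real (\<delta>/c) + y) = of_real \<delta> + c *\<^sub>R y"
      using that(2) by (simp add: scaleR_right_distrib scaleR_of_real_div)
    ultimately show "of_real \<delta> + c *\<^sub>R y \<in> P" by simp
  qed
  have I_scale: "I (c *\<^sub>R y)" if "I y" for y c
  proof -
    consider "c > 0" | "c = 0" | "c < 0" by linarith
    then show ?thesis
    proof cases
      case 1 then show ?thesis using I_pos_scale that by blast
    next
      case 2 then show ?thesis using I_0 by simp
    next
      case 3
      then have "I ((-c) *\<^sub>R (-y))" using I_pos_scale[OF I_neg[OF that], of "-c"] by simp
      then show ?thesis by simp
    qed
  qed
  have I_sos_bdd: "I (s * y)" if "I y" "s \<in> sos" "of_real C - s \<in> P" "C > 0" for y s C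
    unfolding I_def
  proof (intro allI impI conjI)
    fix \<delta> :: real assume d: "\<delta> > 0"
    have "(\<delta>/C) *\<^sub>R (of_real C - s) + s * (of_real (\<delta>/C) - y) \<in> P" using that d qm unfolding I_def
      by (intro qm_add qm_scaleR qm_mult) auto
    moreover have "(\<delta>/C) *\<^sub>R (of_real C - s) + s * (of_real (\<delta>/C) - y) = of_real \<delta> - s * y"
      using that(4) by (simp add: scaleR_conv_of_real algebra_simps of_real_mult[symmetric])
    ultimately show "of_real \<delta> - s * y \<in> P" by simp
    have "(\<delta>/C) *\<^sub>R (of_real C - s) + s * (of_real (\<delta>/C) + y) \<in> P"
      apply (rule qm_add[OF qm])
       apply (rule qm_scaleR[OF qm]) using that d apply simp using that apply simp
      apply (rule qm_mult[OF qm]) using that d by (auto simp: I_def)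
    moreover have "(\<delta>/C) *\<^sub>R (of_real C - s) + s * (of_real (\<delta>/C) + y) = of_real \<delta> + s * y"
      using that(4) by (simp add: scaleR_conv_of_real algebra_simps of_real_mult[symmetric])
    ultimately show "of_real \<delta> + s * y \<in> P" by simp
  qed
  have bnd: "\<exists>C>0. of_real C - s \<in> P" for s
  proof -
    obtain C1 where C1: "of_real C1 - s \<in> P" using arch by blast
    have "of_real (max C1 1 - C1) + (of_real C1 - s) \<in> P" using C1 qm by (intro qm_add qm_of_real) auto
    then have "of_real (max C1 1) - s \<in> P" by (simp add: of_real_diff)
    then show ?thesis by (intro exI[of _ "max C1 1"]) auto
  qed
  have I_mult: "I (y * z)" if "I y" for y z
  proof -
    obtain C1 where C1: "C1 > 0" "of_real C1 - (z+1)^2 \<in> P" using bnd by blast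
    obtain C2 where C2: "C2 > 0" "of_real C2 - (z-1)^2 \<in> P" using bnd by blast
    have "I ((z+1)^2 * y)" using I_sos_bdd[OF that sos_sq C1(2,1)] .
    moreover have "I ((z-1)^2 * (-y))" using I_sos_bdd[OF I_neg[OF that] sos_sq C2(2,1)] .
    ultimately have "I ((1/4::real) *\<^sub>R ((z+1)^2 * y + (z-1)^2 * (-y)))" by (intro I_scale I_add)
    then show ?thesis by (subst four_ident)
  qed
  have I_real: "c = 0" if "I (of_real c)" for c
  proof (rule ccontr)
    assume "c \<noteq> 0"
    then have "\<bar>c\<bar>/2 > 0" by simp
    then have "of_real (\<bar>c\<bar>/2) - of_real c \<in> P" "of_real (\<bar>c\<bar>/2) + of_real c \<in> P"
      using that unfolding I_def by auto
    then have "of_real (\<bar>c\<bar>/2 - c) \<in> P" "of_real (\<bar>c\<bar>/2 + c) \<in> P" by (simp_all add: of_real_diff)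
    then have "\<bar>c\<bar>/2 - c \<ge> 0" "\<bar>c\<bar>/2 + c \<ge> 0" using pos by blast+
    then show False using \<open>c \<noteq> 0\<close> by linarith
  qed
  have I_uniq: "c = d" if "I (x - of_real c)" "I (x - of_real d)" for x c d
  proof -
    have "I ((x - of_real d) + - (x - of_real c))" using that by (intro I_add I_neg)
    then have "I (of_real (c - d))" by (simp add: of_real_diff)
    then show ?thesis using I_real by fastforce
  qed
  define f where "f x = (THE c. I (x - of_real c))" for x
  have f_prop: "I (x - of_real (f x))" for x
  proof -
    have "\<exists>!c. I (x - of_real c)" using I_ex[of x] I_uniq[of x] by blast
    then show ?thesis unfolding f_def by (rule theI')
  qed
  have f_eq: "f x = c" if "I (x - of_real c)" for x c
    using I_uniq[OF f_prop that] .
  have "alg_hom_real f" unfolding alg_hom_real_def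
  proof (intro conjI allI)
    fix x y
    have "I ((x - of_real (f x)) + (y - of_real (f y)))" using f_prop by (intro I_add)
    then show "f (x + y) = f x + f y" by (intro f_eq) (simp add: algebra_simps)
  next
    fix c x
    have "I (c *\<^sub>R (x - of_real (f x)))" using f_prop by (intro I_scale)
    then show "f (c *\<^sub>R x) = c * f x" by (intro f_eq) (simp add: scaleR_conv_of_real right_diff_distrib)
  next
    fix x y
    have "I ((x - of_real (f x)) * y + f x *\<^sub>R (y - of_real (f y)))" using f_prop
      by (intro I_add I_mult I_scale)
    then show "f (x * y) = f x * f y" by (intro f_eq) (simp add: scaleR_conv_of_real algebra_simps)
  next
    show "f 1 = 1" using I_0 by (intro f_eq) simp
  qed
  moreover have "f m \<ge> 0" if "m \<in> P" for m
  proof (rule ccontr)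
    assume "\<not> f m \<ge> 0"
    then have "- f m / 2 > 0" by simp
    then have "of_real (- f m / 2) - (m - of_real (f m)) \<in> P" using f_prop[of m] unfolding I_def by blast
    then have "(of_real (- f m / 2) - (m - of_real (f m))) + m \<in> P" using that qm by (intro qm_add)
    then have "of_real (f m / 2) \<in> P" by (simp add: algebra_simps of_real_diff[symmetric])
    then show False using pos \<open>\<not> f m \<ge> 0\<close> by fastforce
  qed
  ultimately show ?thesis by blast
qed

lemma key_ident: "(1::'a::comm_ring_1) - u + u^(n+2) = (1-u)^2 * (\<Sum>j<n+1. u^j) + u^(n+1)"
proof -
  have "(1-u) * (\<Sum>j<n+1. u^j) = 1 - u^(n+1)" by (rule one_diff_power_eq[symmetric])
  then have "(1-u)^2 * (\<Sum>j<n+1. u^j) = (1-u) * (1 - u^(n+1))"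
    by (simp add: power2_eq_square mult.assoc)
  then show ?thesis by (simp add: algebra_simps)
qed

locale qsetting =
  fixes M :: "'a::{comm_ring_1,real_algebra_1} set" and v :: 'a and r :: real
  assumes qm: "quadratic_module M" and vs: "v \<in> sos"
    and hyp: "\<forall>b\<in>sos. \<exists>p. nonneg_poly p \<and> peval p v - b \<in> M" and r0: "r \<ge> 0"
begin

definition N where "N = {x. \<forall>\<delta>>0. \<exists>q w. nonneg_poly q \<and> w \<in> sos \<and> poly q r \<le> \<delta> \<and> (1+w)*(x + peval q v) \<in> M}"

lemma NI: assumes "nonneg_poly q" "w \<in> sos" "poly q r \<le> \<delta>" "(1+w)*(x + peval q v) \<in> M"
  shows "\<exists>q w. nonneg_poly q \<and> w \<in> sos \<and> poly q r \<le> \<delta> \<and> (1+w)*(x + peval q v) \<in> M"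
  using assms by blast

lemma NE: assumes "x \<in> N" "\<delta> > 0"
  obtains q w where "nonneg_poly q" "w \<in> sos" "poly q r \<le> \<delta>" "(1+w)*(x + peval q v) \<in> M"
  using assms unfolding N_def by blast

lemma N_M: assumes "x \<in> M" shows "x \<in> N"
  unfolding N_def using assms by (intro CollectI allI impI NI[of 0 0]) (simp_all add: nn_0 sos_0 peval_0)

lemma sos1: "w \<in> sos \<Longrightarrow> 1 + w \<in> sos" by (intro sos_add sos_1)

lemma N_add: assumes "x \<in> N" "y \<in> N" shows "x + y \<in> N"
  unfolding N_def
proof (intro CollectI allI impI)
  fix \<delta> :: real assume d: "\<delta> > 0"
  obtain q1 w1 where h1: "nonneg_poly q1" "w1 \<in> sos" "poly q1 r \<le> \<delta>/2" "(1+w1)*(x + peval q1 v) \<in> M"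
    using NE[OF assms(1), of "\<delta>/2"] d by auto
  obtain q2 w2 where h2: "nonneg_poly q2" "w2 \<in> sos" "poly q2 r \<le> \<delta>/2" "(1+w2)*(y + peval q2 v) \<in> M"
    using NE[OF assms(2), of "\<delta>/2"] d by auto
  have eq: "(1 + (w1 + w2 + w1*w2)) * (x + y + peval (q1+q2) v)
    = (1+w2)*((1+w1)*(x + peval q1 v)) + (1+w1)*((1+w2)*(y + peval q2 v))"
    by (simp add: peval_add algebra_simps)
  have "(1+w2)*((1+w1)*(x + peval q1 v)) + (1+w1)*((1+w2)*(y + peval q2 v)) \<in> M"
    by (rule qm_add[OF qm]; rule qm_mult[OF qm]) (use h1 h2 in \<open>auto intro: sos1\<close>)
  then show "\<exists>q w. nonneg_poly q \<and> w \<in> sos \<and> poly q r \<le> \<delta> \<and> (1+w)*(x + y + peval q v) \<in> M"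
    using h1 h2 eq by (intro NI[of "q1+q2" "w1 + w2 + w1*w2"]) (auto intro: nn_add sos_add sos_mult)
qed

lemma N_mult: assumes "s \<in> sos" "x \<in> N" shows "s * x \<in> N"
  unfolding N_def
proof (intro CollectI allI impI)
  fix \<delta> :: real assume d: "\<delta> > 0"
  obtain p where p: "nonneg_poly p" "peval p v - s \<in> M" using hyp assms(1) by blast
  define K where "K = poly p r"
  have K0: "K \<ge> 0" unfolding K_def using poly_nn[OF p(1) r0] .
  have d': "\<delta>/(K+1) > 0" using d K0 by simp
  obtain q w where h: "nonneg_poly q" "w \<in> sos" "poly q r \<le> \<delta>/(K+1)" "(1+w)*(x + peval q v) \<in> M"
    using NE[OF assms(2) d'] by auto
  have eq: "(1+w)*(s*x + peval (p*q) v) = s*((1+w)*(x + peval q v)) + ((1+w)*peval q v)*(peval p v - s)"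
    by (simp add: peval_mult algebra_simps)
  have "s*((1+w)*(x + peval q v)) + ((1+w)*peval q v)*(peval p v - s) \<in> M"
    by (rule qm_add[OF qm]; rule qm_mult[OF qm])
      (use h p assms in \<open>auto intro: sos1 sos_mult peval_sos vs\<close>)
  moreover have "poly (p*q) r \<le> \<delta>"
  proof -
    have "poly (p*q) r = K * poly q r" by (simp add: K_def)
    also have "\<dots> \<le> K * (\<delta>/(K+1))" using h(3) K0 by (intro mult_left_mono) auto
    also have "\<dots> \<le> \<delta>" using K0 d by (simp add: field_simps)
    finally show ?thesis .
  qed
  ultimately show "\<exists>q w. nonneg_poly q \<and> w \<in> sos \<and> poly q r \<le> \<delta> \<and> (1+w)*(s * x + peval q v) \<in> M"
    using h p eq by (intro NI[of "p*q" w]) (auto intro: nn_mult)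
qed

lemma N_qm: "quadratic_module N"
  unfolding quadratic_module_def using N_M qm_one[OF qm] N_add N_mult by blast

lemma N_sat: assumes "s \<in> sos" "(1+s)*x \<in> N" shows "x \<in> N"
  unfolding N_def
proof (intro CollectI allI impI)
  fix \<delta> :: real assume d: "\<delta> > 0"
  obtain q w where h: "nonneg_poly q" "w \<in> sos" "poly q r \<le> \<delta>" "(1+w)*((1+s)*x + peval q v) \<in> M"
    using NE[OF assms(2) d] by auto
  have eq: "(1 + (w + s + w*s))*(x + peval q v) = (1+w)*((1+s)*x + peval q v) + ((1+w)*s*peval q v)"
    by (simp add: algebra_simps)
  have "(1+w)*((1+s)*x + peval q v) + ((1+w)*s*peval q v) \<in> M"
    by (rule qm_add[OF qm]) (use h assms in \<open>auto intro!: qm_sos[OF qm] sos_mult sos1 peval_sos vs\<close>)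
  then show "\<exists>q w. nonneg_poly q \<and> w \<in> sos \<and> poly q r \<le> \<delta> \<and> (1+w)*(x + peval q v) \<in> M"
    using h eq assms by (intro NI[of q "w + s + w*s"]) (auto intro: sos_add sos_mult)
qed

lemma N_closed: assumes "\<forall>\<delta>>0. x + of_real \<delta> \<in> N" shows "x \<in> N"
  unfolding N_def
proof (intro CollectI allI impI)
  fix \<delta> :: real assume d: "\<delta> > 0"
  have "x + of_real (\<delta>/2) \<in> N" using assms d by simp
  then obtain q w where h: "nonneg_poly q" "w \<in> sos" "poly q r \<le> \<delta>/2" "(1+w)*(x + of_real (\<delta>/2) + peval q v) \<in> M"
    using NE[of _ "\<delta>/2"] d by auto
  have eq: "(1+w)*(x + peval (q + [:\<delta>/2:]) v) = (1+w)*(x + of_real (\<delta>/2) + peval q v)"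
    by (simp add: peval_add peval_const algebra_simps)
  show "\<exists>q w. nonneg_poly q \<and> w \<in> sos \<and> poly q r \<le> \<delta> \<and> (1+w)*(x + peval q v) \<in> M"
  proof (rule NI[of "q + [:\<delta>/2:]" w])
    show "nonneg_poly (q + [:\<delta>/2:])" using h(1) d by (intro nn_add nn_const) auto
  qed (use h eq d in auto)
qed

end

context qsetting
begin

lemma N_rho: "of_real (r+1) - v \<in> N"
  unfolding N_def
proof (intro CollectI allI impI)
  fix \<delta> :: real assume d: "\<delta> > 0"
  define \<rho> where "\<rho> = r + 1"
  have rho: "\<rho> > 0" "\<rho> \<ge> 1" unfolding \<rho>_def using r0 by auto
  have lt1: "r/\<rho> < 1" using rho unfolding \<rho>_def by simp
  have ge0: "r/\<rho> \<ge> 0" using rho r0 by simp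
  obtain n where n: "(r/\<rho>)^n < \<delta>/\<rho>" using real_arch_pow_inv[of "\<delta>/\<rho>" "r/\<rho>"] d rho lt1 by auto
  define m where "m = n + 2"
  define c where "c = \<rho> / \<rho>^m"
  have c0: "c \<ge> 0" unfolding c_def using rho by simp
  have "poly (monom c m) r = \<rho> * (r/\<rho>)^m"
    by (simp add: poly_monom c_def power_divide)
  also have "\<dots> \<le> \<rho> * (r/\<rho>)^n" unfolding m_def using rho ge0 lt1
    by (intro mult_left_mono power_decreasing) auto
  also have "\<dots> \<le> \<delta>" using n rho by (simp add: field_simps)
  finally have pq: "poly (monom c m) r \<le> \<delta>" .
  define u where "u = of_real (1/\<rho>) * v"
  have v_eq: "v = of_real \<rho> * u" unfolding u_def using rho
    by (simp add: mult.assoc[symmetric] of_real_mult[symmetric])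
  have cr: "(of_real c :: 'a) * of_real \<rho> ^ m = of_real \<rho>"
  proof -
    have "c * \<rho>^m = \<rho>" unfolding c_def using rho by simp
    then show ?thesis by (metis of_real_mult of_real_power)
  qed
  have eq: "(1+0) * (of_real (r+1) - v + peval (monom c m) v) = of_real \<rho> * (1 - u + u^(n+2))"
  proof -
    have "(1+0) * (of_real (r+1) - v + peval (monom c m) v) = of_real \<rho> - of_real \<rho> * u + (of_real c * of_real \<rho> ^ m) * u^m"
      unfolding \<rho>_def[symmetric] by (simp add: peval_monom v_eq power_mult_distrib mult.assoc)
    also have "\<dots> = of_real \<rho> - of_real \<rho> * u + of_real \<rho> * u^m" by (subst cr) (rule refl)
    also have "\<dots> = of_real \<rho> * (1 - u + u^(n+2))" unfolding m_def by (simp add: algebra_simps)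
    finally show ?thesis .
  qed
  have us: "u \<in> sos" unfolding u_def using rho vs by (intro sos_mult sos_of_real) auto
  have "of_real \<rho> * (1 - u + u^(n+2)) \<in> sos" unfolding key_ident using rho us
    by (intro sos_mult sos_of_real sos_add sos_sq sos_sum sos_pow) auto
  then have "(1+0) * (of_real (r+1) - v + peval (monom c m) v) \<in> M" unfolding eq by (rule qm_sos[OF qm])
  then show "\<exists>q w. nonneg_poly q \<and> w \<in> sos \<and> poly q r \<le> \<delta> \<and> (1+w)*(of_real (r+1) - v + peval q v) \<in> M"
    using pq c0 by (intro NI[of "monom c m" 0]) (auto intro: nn_monom sos_0)
qed

lemma N_pow: "of_real ((r+1)^k) - v^k \<in> N"
proof -
  have "of_real ((r+1)^k) - v^k = (\<Sum>i<k. v^(k - Suc i) * of_real (r+1)^i) * (of_real (r+1) - v)"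
    by (simp add: power_diff_sumr2 mult.commute)
  also have "\<dots> \<in> N" using r0 
    by (intro qm_mult[OF N_qm] N_rho sos_sum sos_mult sos_pow vs sos_of_real) auto
  finally show ?thesis .
qed

lemma N_poly: assumes "nonneg_poly p" shows "of_real (poly p (r+1)) - peval p v \<in> N"
proof -
  have pv: "peval p v = (\<Sum>i\<le>degree (map_poly of_real p :: 'a poly). of_real (coeff p i) * v ^ i)"
    unfolding peval_def by (simp add: poly_altdef coeff_map_poly)
  have dg: "degree (map_poly of_real p :: 'a poly) = degree p"
    by (simp add: degree_map_poly)
  have "of_real (poly p (r+1)) - peval p v = (\<Sum>i\<le>degree p. coeff p i *\<^sub>R (of_real ((r+1)^i) - v^i))"
    unfolding pv dg poly_altdef by (simp add: of_real_sum sum_subtractf[symmetric] scaleR_conv_of_real algebra_simps)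
  also have "\<dots> \<in> N" using assms
    by (intro qm_sum[OF N_qm] qm_scaleR[OF N_qm] N_pow) (auto simp: nonneg_poly_def)
  finally show ?thesis .
qed

lemma N_arch: "\<exists>C. of_real C - x \<in> N"
proof -
  obtain p where p: "nonneg_poly p" "peval p v - x^2 \<in> M" using hyp sos_sq by blast
  define K where "K = poly p (r+1)"
  have "(of_real K - peval p v) + (peval p v - x^2) + (x-1)^2 \<in> N"
    unfolding K_def using p
    by (intro qm_add[OF N_qm] N_poly N_M qm_sos[OF N_qm] sos_sq) auto
  moreover have "(of_real K - peval p v) + (peval p v - x^2) + (x-1)^2 = 2 *\<^sub>R (of_real ((K+1)/2) - x)"
  proof -
    have h2: "2 *\<^sub>R (of_real ((K+1)/2) - x) = of_real (K+1) - 2 *\<^sub>R x"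
      by (subst scaleR_right_diff_distrib, subst scaleR_of_real_div) simp_all
    show ?thesis unfolding h2 by (simp add: scaleR_2 power2_eq_square algebra_simps)
  qed
  ultimately have "2 *\<^sub>R (of_real ((K+1)/2) - x) \<in> N" by simp
  then have "(1/2::real) *\<^sub>R (2 *\<^sub>R (of_real ((K+1)/2) - x)) \<in> N"
    by (rule qm_scaleR[OF N_qm, rotated]) simp
  then show ?thesis by (intro exI[of _ "(K+1)/2"]) simp
qed

end

context qsetting
begin

lemma key:
  assumes H: "\<forall>f. alg_hom_real f \<and> (\<forall>m\<in>M. f m \<ge> 0) \<longrightarrow> f a \<ge> 0"
  shows "a \<in> N"
proof (rule ccontr)
  assume aN: "a \<notin> N"
  then obtain \<delta> where d: "\<delta> > 0" "a + of_real \<delta> \<notin> N" using N_closed by blast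
  define b where "b = a + of_real \<delta>"
  define Q where "Q = {y. \<exists>s t n. s \<in> sos \<and> t \<in> sos \<and> n \<in> N \<and> (1+s)*y = n - t*b}"
  have QI: "y \<in> Q" if "s \<in> sos" "t \<in> sos" "n \<in> N" "(1+s)*y = n - t*b" for y s t n
    using that unfolding Q_def by blast
  have Q1: "1 \<in> Q" by (rule QI[of 0 0 1]) (auto simp: sos_0 qm_one[OF N_qm])
  have Qadd: "x + y \<in> Q" if hxy: "x \<in> Q" "y \<in> Q" for x y
  proof -
    obtain s1 t1 n1 where h1: "s1 \<in> sos" "t1 \<in> sos" "n1 \<in> N" "(1+s1)*x = n1 - t1*b"
      using hxy(1) unfolding Q_def by blast
    obtain s2 t2 n2 where h2: "s2 \<in> sos" "t2 \<in> sos" "n2 \<in> N" "(1+s2)*y = n2 - t2*b"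
      using hxy(2) unfolding Q_def by blast
    have "(1 + (s1+s2+s1*s2))*(x+y) = (1+s2)*((1+s1)*x) + (1+s1)*((1+s2)*y)" by (simp add: algebra_simps)
    also have "\<dots> = (1+s2)*(n1 - t1*b) + (1+s1)*(n2 - t2*b)" using h1 h2 by simp
    also have "\<dots> = ((1+s2)*n1 + (1+s1)*n2) - ((1+s2)*t1 + (1+s1)*t2)*b" by (simp add: algebra_simps)
    finally show ?thesis
      by (rule QI[rotated 3]) (use h1 h2 in \<open>auto intro!: sos_add sos_mult sos1 qm_add[OF N_qm] qm_mult[OF N_qm]\<close>)
  qed
  have Qmult: "s * x \<in> Q" if hsx: "s \<in> sos" "x \<in> Q" for s x
  proof -
    obtain s1 t1 n1 where h1: "s1 \<in> sos" "t1 \<in> sos" "n1 \<in> N" "(1+s1)*x = n1 - t1*b"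
      using hsx(2) unfolding Q_def by blast
    have "(1+s1)*(s*x) = s*((1+s1)*x)" by (simp add: algebra_simps)
    also have "\<dots> = s*n1 - (s*t1)*b" unfolding h1(4) by (simp add: algebra_simps)
    finally show ?thesis
      by (rule QI[rotated 3]) (use h1 hsx in \<open>auto intro!: sos_mult qm_mult[OF N_qm]\<close>)
  qed
  have Q_qm: "quadratic_module Q" using Q1 Qadd Qmult unfolding quadratic_module_def by simp
  have NQ: "N \<subseteq> Q"
  proof
    fix y assume "y \<in> N"
    then show "y \<in> Q" by (intro QI[of 0 0 y]) (auto simp: sos_0)
  qed
  have bQ: "b \<notin> Q"
  proof
    assume "b \<in> Q"
    then obtain s t n where h: "s \<in> sos" "t \<in> sos" "n \<in> N" "(1+s)*b = n - t*b"
      unfolding Q_def by blast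
    have "(1 + (s+t))*b = (1+s)*b + t*b" by (simp add: algebra_simps)
    also have "\<dots> = n" using h(4) by simp
    finally have "(1 + (s+t))*b = n" .
    then have "b \<in> N" using h by (intro N_sat[of "s+t" b]) (auto intro: sos_add)
    then show False using d b_def by simp
  qed
  have mbQ: "-b \<in> Q" by (rule QI[of 0 1 0]) (auto simp: sos_0 sos_1 qm_0[OF N_qm])
  have m1Q: "-1 \<notin> Q" using qm_minus_one[OF Q_qm] bQ by blast
  define F where "F = {P. quadratic_module P \<and> Q \<subseteq> P \<and> -1 \<notin> P}"
  have "\<exists>P\<in>F. \<forall>X\<in>F. P \<subseteq> X \<longrightarrow> X = P"
  proof (rule subset_Zorn_nonempty)
    show "F \<noteq> {}" using Q_qm m1Q unfolding F_def by blast
  next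
    fix C assume C: "C \<noteq> {}" "subset.chain F C"
    then have CF: "C \<subseteq> F" and ch: "\<forall>X\<in>C. \<forall>Y\<in>C. X \<subseteq> Y \<or> Y \<subseteq> X"
      by (auto simp: subset_chain_def)
    have CQ: "\<And>X. X \<in> C \<Longrightarrow> quadratic_module X" using CF unfolding F_def by blast
    have "quadratic_module (\<Union>C)" unfolding quadratic_module_def
    proof (intro conjI ballI)
      obtain X where "X \<in> C" using C(1) by blast
      then show "1 \<in> \<Union>C" using CQ qm_one by blast
    next
      fix x y :: 'a assume "x \<in> \<Union>C" "y \<in> \<Union>C"
      then obtain X Y where XY: "X \<in> C" "Y \<in> C" "x \<in> X" "y \<in> Y" by blast
      show "x + y \<in> \<Union>C"
      proof (cases "X \<subseteq> Y")
        case True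
        then show ?thesis using XY CQ[of Y] qm_add by blast
      next
        case False
        then have "Y \<subseteq> X" using ch XY by blast
        then show ?thesis using XY CQ[of X] qm_add by blast
      qed
    next
      fix s x :: 'a assume "s \<in> sos" "x \<in> \<Union>C"
      then show "s * x \<in> \<Union>C" using CQ qm_mult by blast
    qed
    moreover have "Q \<subseteq> \<Union>C" using C(1) CF unfolding F_def by blast
    moreover have "-1 \<notin> \<Union>C" using CF unfolding F_def by blast
    ultimately show "\<Union>C \<in> F" unfolding F_def by blast
  qed
  then obtain P where PF: "P \<in> F" and Pmax: "\<forall>X\<in>F. P \<subseteq> X \<longrightarrow> X = P" by blast
  have Pqm: "quadratic_module P" and QP: "Q \<subseteq> P" and m1P: "-1 \<notin> P" using PF unfolding F_def by auto
  have ext: "\<exists>p\<in>P. \<exists>s\<in>sos. -1 = p + s*z" if "z \<notin> P" for z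
  proof -
    define P1 where "P1 = {p + s*z | p s. p \<in> P \<and> s \<in> sos}"
    have P1I: "p + s*z \<in> P1" if "p \<in> P" "s \<in> sos" for p s using that unfolding P1_def by blast
    have "quadratic_module P1" unfolding quadratic_module_def
    proof (intro conjI ballI)
      show "1 \<in> P1" using P1I[of 1 0] qm_one[OF Pqm] sos_0 by simp
    next
      fix x y assume "x \<in> P1" "y \<in> P1"
      then obtain p1 s1 p2 s2 where h: "p1 \<in> P" "s1 \<in> sos" "x = p1 + s1*z" "p2 \<in> P" "s2 \<in> sos" "y = p2 + s2*z"
        unfolding P1_def by blast
      have e: "x + y = (p1 + p2) + (s1 + s2)*z" using h by (simp add: algebra_simps)
      show "x + y \<in> P1" unfolding e by (rule P1I) (use h in \<open>auto intro: qm_add[OF Pqm] sos_add\<close>)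
    next
      fix t x :: 'a assume "t \<in> sos" "x \<in> P1"
      then obtain p1 s1 where h: "p1 \<in> P" "s1 \<in> sos" "x = p1 + s1*z"
        unfolding P1_def by blast
      have e: "t * x = t*p1 + (t*s1)*z" using h by (simp add: algebra_simps)
      show "t * x \<in> P1" unfolding e by (rule P1I) (use h \<open>t \<in> sos\<close> in \<open>auto intro: qm_mult[OF Pqm] sos_mult\<close>)
    qed
    moreover have "P \<subseteq> P1" using P1I[of _ 0] sos_0 by auto
    moreover have "z \<in> P1" using P1I[of 0 1] qm_0[OF Pqm] sos_1 by simp
    ultimately have "P1 \<noteq> P" using \<open>z \<notin> P\<close> by blast
    then have "P1 \<notin> F" using Pmax \<open>P \<subseteq> P1\<close> by blast
    then have "-1 \<in> P1" using \<open>quadratic_module P1\<close> \<open>P \<subseteq> P1\<close> QP unfolding F_def by blast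
    then show ?thesis unfolding P1_def by blast
  qed
  have tot: "\<forall>x. x \<in> P \<or> -x \<in> P"
  proof (rule allI, rule ccontr)
    fix x assume nx: "\<not> (x \<in> P \<or> -x \<in> P)"
    obtain p1 s1 where h1: "p1 \<in> P" "s1 \<in> sos" "-1 = p1 + s1*x" using ext nx by blast
    obtain p2 s2 where h2: "p2 \<in> P" "s2 \<in> sos" "-1 = p2 + s2*(-x)" using ext[of "-x"] nx by blast
    have e1: "p1 = -1 - s1*x" using h1(3) by (simp add: algebra_simps)
    have e2: "p2 = -1 + s2*x" using h2(3) by (simp add: algebra_simps)
    have "-s1 = s2 + (s2*p1 + s1*p2)" unfolding e1 e2 by (simp add: algebra_simps)
    moreover have "s2 + (s2*p1 + s1*p2) \<in> P"
    proof -
      have "s2 \<in> P" using h2(2) by (rule qm_sos[OF Pqm])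
      moreover have "s2*p1 \<in> P" using h1(1) h2(2) by (rule qm_mult[OF Pqm, rotated])
      moreover have "s1*p2 \<in> P" using h2(1) h1(2) by (rule qm_mult[OF Pqm, rotated])
      ultimately show ?thesis by (simp add: qm_add[OF Pqm])
    qed
    ultimately have "-s1 \<in> P" by simp
    then have "s1 * x \<in> P" using qm_supp_ideal[OF Pqm qm_sos[OF Pqm h1(2)]] by blast
    then have "p1 + s1*x \<in> P" using h1 qm_add[OF Pqm] by blast
    then show False using h1(3) m1P by simp
  qed
  have arch: "\<forall>x. \<exists>C. of_real C - x \<in> P"
  proof
    fix x :: 'a
    obtain C where "of_real C - x \<in> N" using N_arch by blast
    then show "\<exists>C. of_real C - x \<in> P" using NQ QP by blast
  qed
  obtain f where f: "alg_hom_real f" "\<forall>m\<in>P. f m \<ge> 0" using hom_from_qm[OF Pqm m1P tot arch] by blast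
  have "\<forall>m\<in>M. f m \<ge> 0" using f(2) N_M NQ QP by blast
  then have fa: "f a \<ge> 0" using H f(1) by blast
  have fb: "f (-b) \<ge> 0" using f(2) mbQ QP by blast
  have f0: "f 0 = 0" using hom_of_real[OF f(1), of 0] by simp
  have hadd: "\<And>x y. f (x+y) = f x + f y" using f(1) unfolding alg_hom_real_def by blast
  have "f (-b) + f b = f (-b + b)" by (simp only: hadd)
  also have "\<dots> = 0" using f0 by simp
  finally have "f (-b) + f b = 0" .
  moreover have "f b = f a + \<delta>" unfolding b_def hadd hom_of_real[OF f(1)] ..
  ultimately show False using fa fb d by linarith
qed

end

theorem theorem4p5:
  fixes M :: "'a::{comm_ring_1,real_algebra_1} set" and v a :: 'a
  assumes "quadratic_module M"
    and "v \<in> sos"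
    and "\<forall>b\<in>sos. \<exists>p. nonneg_poly p \<and> peval p v - b \<in> M"
  shows "(\<forall>f. alg_hom_real f \<and> (\<forall>m\<in>M. f m \<ge> 0) \<longrightarrow> f a \<ge> 0) \<longleftrightarrow>
         (\<forall>r::real. r \<ge> 0 \<longrightarrow> (\<forall>\<epsilon>>0. \<exists>q w. nonneg_poly q \<and> w \<in> sos \<and>
              poly q r \<le> \<epsilon> \<and> (1 + w) * (a + peval q v) \<in> M))"
proof
  assume H: "\<forall>f. alg_hom_real f \<and> (\<forall>m\<in>M. f m \<ge> 0) \<longrightarrow> f a \<ge> 0"
  show "\<forall>r::real. r \<ge> 0 \<longrightarrow> (\<forall>\<epsilon>>0. \<exists>q w. nonneg_poly q \<and> w \<in> sos \<and>
              poly q r \<le> \<epsilon> \<and> (1 + w) * (a + peval q v) \<in> M)"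
  proof (intro allI impI)
    fix r \<epsilon> :: real assume r: "r \<ge> 0" and e: "\<epsilon> > 0"
    interpret S: qsetting M v r using assms r by unfold_locales auto
    have "a \<in> S.N" using S.key H by blast
    then show "\<exists>q w. nonneg_poly q \<and> w \<in> sos \<and> poly q r \<le> \<epsilon> \<and> (1 + w) * (a + peval q v) \<in> M"
      using e unfolding S.N_def by blast
  qed
next
  assume H2: "\<forall>r::real. r \<ge> 0 \<longrightarrow> (\<forall>\<epsilon>>0. \<exists>q w. nonneg_poly q \<and> w \<in> sos \<and>
              poly q r \<le> \<epsilon> \<and> (1 + w) * (a + peval q v) \<in> M)"
  show "\<forall>f. alg_hom_real f \<and> (\<forall>m\<in>M. f m \<ge> 0) \<longrightarrow> f a \<ge> 0"
  proof (intro allI impI)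
    fix f :: "'a \<Rightarrow> real" assume hf: "alg_hom_real f \<and> (\<forall>m\<in>M. f m \<ge> 0)"
    show "f a \<ge> 0"
    proof (rule ccontr)
      assume neg: "\<not> f a \<ge> 0"
      have rv: "f v \<ge> 0" using hf qm_sos[OF assms(1) assms(2)] by blast
      have e: "- f a / 2 > 0" using neg by simp
      obtain q w where h: "nonneg_poly q" "w \<in> sos" "poly q (f v) \<le> - f a / 2" "(1+w)*(a + peval q v) \<in> M"
        using H2[rule_format, OF rv e] by blast
      have fw: "f w \<ge> 0" using hf qm_sos[OF assms(1) h(2)] by blast
      have "f ((1+w)*(a + peval q v)) = (1 + f w) * (f a + poly q (f v))"
        using hf hom_peval[of f q v] unfolding alg_hom_real_def by simp
      moreover have "f ((1+w)*(a + peval q v)) \<ge> 0" using hf h(4) by blast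
      ultimately have "(1 + f w) * (f a + poly q (f v)) \<ge> 0" by simp
      then have "f a + poly q (f v) \<ge> 0" using fw by (simp add: zero_le_mult_iff)
      then show False using h(3) neg by linarith
    qed
  qed
qed

end
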